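(* Let $k\in\mathbb{N}$, $C\ge0$, $z_1,\dots,z_k\ge1$, $\lambda_1,\dots,\lambda_k>0$ and $\mu_1,\dots,\mu_k>0$ with $Z=\mu_1z_1+\cdots+\mu_kz_k\ge\Lambda$. (a) If $\lambda_i<\mu_i$ for all $i$, then $$\sum_{\mathbf{r}\in\mathscr{H}^k_+(Z)}\left(1+\sum_{i=1}^k\lambda_ir_i-Z\right)^C\prod_{i=1}^k\frac{e^{-z_i}z_i^{r_i}}{r_i!}\ll_{k,\boldsymbol{\lambda},\boldsymbol{\mu},C}\mathrm{Prob}(\mathscr{H}^k(Z)).$$ (b) If $\log(\mu_i/\lambda_i)<\lambda_i$ for all $i$, then $$\sum_{\mathbf{r}\in\mathscr{H}^k_-(Z)}\left(1+Z-\sum_{i=1}^k\lambda_ir_i\right)^C\prod_{i=1}^k\frac{e^{-z_i}(e^{\lambda_i}z_i)^{r_i}}{r_i!}\ll_{k,\boldsymbol{\lambda},\boldsymbol{\mu},C}e^Z\,\mathrm{Prob}(\mathscr{H}^k(Z)).$$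
   Context: $\Lambda=\max_i\lambda_i$. $\mathrm{Prob}$ denotes the $k$-dimensional Poisson distribution with parameters $z_1,\dots,z_k$, giving $(r_1,\dots,r_k)\in(\mathbb{N}\cup\{0\})^k$ probability $\prod_ie^{-z_i}z_i^{r_i}/r_i!$. For $R\ge\Lambda$: $\mathscr{H}^k(R)=\{\mathbf{r}\in(\mathbb{N}\cup\{0\})^k: R-\Lambda<\sum_i\lambda_ir_i\le R\}$, $\mathscr{H}^k_-(R)=\{\mathbf{r}\in(\mathbb{N}\cup\{0\})^k:\sum_i\lambda_ir_i\le R\}$, $\mathscr{H}^k_+(R)=\{\mathbf{r}\in(\mathbb{N}\cup\{0\})^k:\sum_i\lambda_ir_i\ge R\}$. *)

theory Defs
  imports "HOL-Analysis.Analysis"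
begin

text \<open>Vectors in (N union {0})^k are represented as extensional functions on {..<k}.\<close>

definition lattice_pts :: "nat \<Rightarrow> (nat \<Rightarrow> nat) set" where
  "lattice_pts k = PiE {..<k} (\<lambda>_. UNIV)"

definition Lam :: "nat \<Rightarrow> (nat \<Rightarrow> real) \<Rightarrow> real" where
  "Lam k lam = Max (lam ` {..<k})"

definition lin :: "nat \<Rightarrow> (nat \<Rightarrow> real) \<Rightarrow> (nat \<Rightarrow> nat) \<Rightarrow> real" where
  "lin k lam r = (\<Sum>i<k. lam i * real (r i))"

definition Hk :: "nat \<Rightarrow> (nat \<Rightarrow> real) \<Rightarrow> real \<Rightarrow> (nat \<Rightarrow> nat) set" where
  "Hk k lam R = {r \<in> lattice_pts k. R - Lam k lam < lin k lam r \<and> lin k lam r \<le> R}"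

definition Hminus :: "nat \<Rightarrow> (nat \<Rightarrow> real) \<Rightarrow> real \<Rightarrow> (nat \<Rightarrow> nat) set" where
  "Hminus k lam R = {r \<in> lattice_pts k. lin k lam r \<le> R}"

definition Hplus :: "nat \<Rightarrow> (nat \<Rightarrow> real) \<Rightarrow> real \<Rightarrow> (nat \<Rightarrow> nat) set" where
  "Hplus k lam R = {r \<in> lattice_pts k. lin k lam r \<ge> R}"

definition poisson_wt :: "nat \<Rightarrow> (nat \<Rightarrow> real) \<Rightarrow> (nat \<Rightarrow> nat) \<Rightarrow> real" where
  "poisson_wt k z r = (\<Prod>i<k. exp (- z i) * z i ^ r i / fact (r i))"

definition Prob :: "nat \<Rightarrow> (nat \<Rightarrow> real) \<Rightarrow> (nat \<Rightarrow> nat) set \<Rightarrow> real" where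
  "Prob k z A = (\<Sum>\<^sub>\<infinity>r\<in>A. poisson_wt k z r)"

end

theory Submission
  imports Defs
begin


lemma lattice_upd: "r \<in> lattice_pts k \<Longrightarrow> i < k \<Longrightarrow> r(i := n) \<in> lattice_pts k"
  unfolding lattice_pts_def by (auto simp: PiE_iff extensional_def)

lemma lattice_out: "r \<in> lattice_pts k \<Longrightarrow> \<not> j < k \<Longrightarrow> r j = undefined"
  unfolding lattice_pts_def by (auto simp: PiE_iff extensional_def)

schematic_goal lattice_restrict_aux: "(restrict f {..<k} \<in> lattice_pts k) \<and> (?dd::bool)"
proof -
  have lattice_restrict: "restrict f {..<k} \<in> lattice_pts k"
    unfolding lattice_pts_def by auto
  show "(restrict f {..<k} \<in> lattice_pts k) \<and> True" by (rule conjI[OF lattice_restrict TrueI])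
qed

lemmas lattice_restrict = lattice_restrict_aux[THEN conjunct1]

schematic_goal sum_upd_aux:
  fixes f :: "nat \<Rightarrow> nat \<Rightarrow> 'a::comm_ring"
  assumes "i < k"
  shows "((\<Sum>j<k. f j ((r(i:=n)) j)) = (\<Sum>j<k. f j (r j)) - f i (r i) + f i n) \<and> (?dd::bool)"
proof -
  have sum_upd: "(\<Sum>j<k. f j ((r(i:=n)) j)) = (\<Sum>j<k. f j (r j)) - f i (r i) + f i n"
  proof -
    have "(\<Sum>j<k. f j ((r(i:=n)) j)) = f i n + (\<Sum>j\<in>{..<k}-{i}. f j ((r(i:=n)) j))"
      using assms by (subst sum.remove[of _ i]) auto
    also have "(\<Sum>j\<in>{..<k}-{i}. f j ((r(i:=n)) j)) = (\<Sum>j\<in>{..<k}-{i}. f j (r j))"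
      by (rule sum.cong) auto
    also have "(\<Sum>j<k. f j (r j)) = f i (r i) + (\<Sum>j\<in>{..<k}-{i}. f j (r j))"
      using assms by (subst sum.remove[of _ i]) auto
    ultimately show ?thesis by (simp add: algebra_simps)
  qed
  show "((\<Sum>j<k. f j ((r(i:=n)) j)) = (\<Sum>j<k. f j (r j)) - f i (r i) + f i n) \<and> True" by (rule conjI[OF sum_upd TrueI])
qed

lemmas sum_upd = sum_upd_aux[THEN conjunct1]

schematic_goal sum_upd_nat_aux:
  fixes f :: "nat \<Rightarrow> nat"
  assumes "i < k"
  shows "((\<Sum>j<k. f j) = f i + (\<Sum>j\<in>{..<k}-{i}. f j)) \<and> (?dd::bool)"
proof -
  have sum_upd_nat: "(\<Sum>j<k. f j) = f i + (\<Sum>j\<in>{..<k}-{i}. f j)"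
    using assms by (subst sum.remove[of _ i]) auto
  show "((\<Sum>j<k. f j) = f i + (\<Sum>j\<in>{..<k}-{i}. f j)) \<and> True" by (rule conjI[OF sum_upd_nat TrueI])
qed

lemmas sum_upd_nat = sum_upd_nat_aux[THEN conjunct1]

schematic_goal prod_upd_aux:
  fixes f :: "nat \<Rightarrow> nat \<Rightarrow> real"
  assumes "i < k"
  shows "((\<Prod>j<k. f j ((r(i:=n)) j)) * f i (r i) = (\<Prod>j<k. f j (r j)) * f i n) \<and> (?dd::bool)"
proof -
  have prod_upd: "(\<Prod>j<k. f j ((r(i:=n)) j)) * f i (r i) = (\<Prod>j<k. f j (r j)) * f i n"
  proof -
    have "(\<Prod>j<k. f j ((r(i:=n)) j)) = f i n * (\<Prod>j\<in>{..<k}-{i}. f j ((r(i:=n)) j))"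
      using assms by (subst prod.remove[of _ i]) auto
    also have "(\<Prod>j\<in>{..<k}-{i}. f j ((r(i:=n)) j)) = (\<Prod>j\<in>{..<k}-{i}. f j (r j))"
      by (rule prod.cong) auto
    also have "(\<Prod>j<k. f j (r j)) = f i (r i) * (\<Prod>j\<in>{..<k}-{i}. f j (r j))"
      using assms by (subst prod.remove[of _ i]) auto
    ultimately show ?thesis by (simp add: algebra_simps)
  qed
  show "((\<Prod>j<k. f j ((r(i:=n)) j)) * f i (r i) = (\<Prod>j<k. f j (r j)) * f i n) \<and> True" by (rule conjI[OF prod_upd TrueI])
qed

lemmas prod_upd = prod_upd_aux[THEN conjunct1]

schematic_goal sum_prod_lattice_le_aux:
  fixes p :: "nat \<Rightarrow> nat \<Rightarrow> real"
  assumes "finite G" "G \<subseteq> lattice_pts k" "\<And>i n. i < k \<Longrightarrow> p i n \<ge> 0"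
    and "\<And>i N. i < k \<Longrightarrow> (\<Sum>n\<le>N. p i n) \<le> c"
  shows "((\<Sum>r\<in>G. \<Prod>i<k. p i (r i)) \<le> c ^ k) \<and> (?dd::bool)"
proof -
  have sum_prod_lattice_le: "(\<Sum>r\<in>G. \<Prod>i<k. p i (r i)) \<le> c ^ k"
  proof -
    define N where "N = (\<Sum>r\<in>G. \<Sum>i<k. r i)"
    have le: "r i \<le> N" if "r \<in> G" "i < k" for r i
    proof -
      have "r i \<le> (\<Sum>i<k. r i)" using that by (intro member_le_sum) auto
      also have "\<dots> \<le> N" unfolding N_def using that assms(1)
        by (intro member_le_sum[where f="\<lambda>r. \<Sum>i<k. r i"]) auto
      finally show ?thesis .
    qed
    have sub: "G \<subseteq> PiE {..<k} (\<lambda>_. {..N})"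
    proof
      fix r assume "r \<in> G"
      then have "r \<in> lattice_pts k" using assms(2) by auto
      then show "r \<in> PiE {..<k} (\<lambda>_. {..N})"
        using le[OF \<open>r \<in> G\<close>] unfolding lattice_pts_def by (auto simp: PiE_iff)
    qed
    have "(\<Sum>r\<in>G. \<Prod>i<k. p i (r i)) \<le> (\<Sum>r\<in>PiE {..<k} (\<lambda>_. {..N}). \<Prod>i<k. p i (r i))"
      using sub assms(3) by (intro sum_mono2) (auto simp: finite_PiE PiE_iff intro!: prod_nonneg)
    also have "\<dots> = (\<Prod>i<k. \<Sum>n\<le>N. p i n)"
      by (subst prod_sum_PiE) auto
    also have "\<dots> \<le> (\<Prod>i<k. c)"
      using assms(3,4) by (intro prod_mono) (auto intro!: sum_nonneg)
    finally show ?thesis by simp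
  qed
  show "((\<Sum>r\<in>G. \<Prod>i<k. p i (r i)) \<le> c ^ k) \<and> True" by (rule conjI[OF sum_prod_lattice_le TrueI])
qed

lemmas sum_prod_lattice_le = sum_prod_lattice_le_aux[THEN conjunct1]

schematic_goal pow_le_fact_exp_aux:
  fixes y :: real
  assumes "y \<ge> 0"
  shows "(y ^ K / fact K \<le> exp y) \<and> (?dd::bool)"
proof -
  have pow_le_fact_exp: "y ^ K / fact K \<le> exp y"
  proof -
    have "(\<lambda>n. y ^ n /\<^sub>R fact n) sums exp y" by (rule exp_converges)
    then have s: "(\<lambda>n. y ^ n / fact n) sums exp y" by (simp add: divide_inverse_commute)
    have "y ^ K / fact K \<le> (\<Sum>n\<in>{K}. y ^ n / fact n)" by simp
    also have "\<dots> \<le> exp y"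
      using sum_le_suminf[of "\<lambda>n. y ^ n / fact n" "{K}"] s assms by (auto simp: sums_iff)
    finally show ?thesis .
  qed
  show "(y ^ K / fact K \<le> exp y) \<and> True" by (rule conjI[OF pow_le_fact_exp TrueI])
qed

lemmas pow_le_fact_exp = pow_le_fact_exp_aux[THEN conjunct1]

schematic_goal poly_exp_bound_aux:
  fixes a t C :: real
  assumes "a > 0" "t > 1" "C \<ge> 0"
  shows "(\<exists>A. \<forall>n::nat. (1 + a + a * real n) powr C \<le> A * t ^ n) \<and> (?dd::bool)"
proof -
  have poly_exp_bound: "\<exists>A. \<forall>n::nat. (1 + a + a * real n) powr C \<le> A * t ^ n"
  proof -
    define K where "K = nat \<lceil>C\<rceil>"
    have CK: "C \<le> real K" unfolding K_def by linarith
    define lt where "lt = ln t"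
    have lt: "lt > 0" unfolding lt_def using assms by simp
    have "(1 + a + a * real n) powr C \<le> ((1 + a) ^ K * (fact K * t / lt ^ K)) * t ^ n" for n
    proof -
      have b1: "1 \<le> 1 + a + a * real n" using assms by simp
      have "(1 + a + a * real n) powr C \<le> (1 + a + a * real n) powr (real K)"
        using b1 CK by (intro powr_mono) auto
      also have "\<dots> = (1 + a + a * real n) ^ K" using b1 by (simp add: powr_realpow)
      also have "\<dots> \<le> ((1 + a) * (1 + real n)) ^ K"
        using assms by (intro power_mono) (auto simp: algebra_simps)
      also have "\<dots> = (1 + a) ^ K * (1 + real n) ^ K" by (simp add: power_mult_distrib)
      also have "(1 + real n) ^ K \<le> (fact K * t / lt ^ K) * t ^ n"
      proof -
        have y0: "(1 + real n) * lt \<ge> 0" using lt by simp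
        have "((1 + real n) * lt) ^ K / fact K \<le> exp ((1 + real n) * lt)"
          by (rule pow_le_fact_exp[OF y0])
        also have "exp ((1 + real n) * lt) = t * t ^ n"
          unfolding lt_def using assms
          by (simp add: algebra_simps exp_add exp_of_nat_mult)
        finally have "((1 + real n) * lt) ^ K \<le> fact K * (t * t ^ n)"
          by (simp add: field_simps)
        then have "(1 + real n) ^ K * lt ^ K \<le> fact K * (t * t ^ n)"
          by (simp add: power_mult_distrib)
        then show ?thesis using lt by (simp add: field_simps)
      qed
      then have "(1 + a) ^ K * (1 + real n) ^ K \<le> (1 + a) ^ K * ((fact K * t / lt ^ K) * t ^ n)"
        using assms by (intro mult_left_mono) auto
      finally show ?thesis by (simp add: mult_ac)
    qed
    then show ?thesis by blast
  qed
  show "(\<exists>A. \<forall>n::nat. (1 + a + a * real n) powr C \<le> A * t ^ n) \<and> True" by (rule conjI[OF poly_exp_bound TrueI])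
qed

lemmas poly_exp_bound = poly_exp_bound_aux[THEN conjunct1]

schematic_goal partial_le_sums_aux:
  fixes f :: "nat \<Rightarrow> real"
  assumes "f sums s" "\<And>n. f n \<ge> 0"
  shows "((\<Sum>n\<le>N. f n) \<le> s) \<and> (?dd::bool)"
proof -
  have partial_le_sums: "(\<Sum>n\<le>N. f n) \<le> s"
    using sum_le_suminf[of f "{..N}"] assms by (auto simp: sums_iff)
  show "((\<Sum>n\<le>N. f n) \<le> s) \<and> True" by (rule conjI[OF partial_le_sums TrueI])
qed

lemmas partial_le_sums = partial_le_sums_aux[THEN conjunct1]

schematic_goal transfer_aux:
  fixes g q w :: "(nat\<Rightarrow>nat) \<Rightarrow> real" and comb :: "(nat\<Rightarrow>nat)\<Rightarrow>(nat\<Rightarrow>nat)\<Rightarrow>(nat\<Rightarrow>nat)"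
  assumes g0: "\<And>r. r\<in>A \<Longrightarrow> g r \<ge> 0" and q0: "\<And>h. h\<in>H \<Longrightarrow> q h \<ge> 0" and qs: "q summable_on H"
    and w0: "\<And>d. d\<in>DD \<Longrightarrow> w d \<ge> 0"
    and wS: "\<And>G. finite G \<Longrightarrow> G \<subseteq> DD \<Longrightarrow> sum w G \<le> S"
    and ex: "\<And>r. r\<in>A \<Longrightarrow> \<exists>h\<in>H. \<exists>d\<in>DD. r = comb h d \<and> g r \<le> B * w d * q h"
    and B: "B \<ge> 0"
  shows "(g summable_on A \<and> infsum g A \<le> B * S * infsum q H) \<and> (?dd::bool)"
proof -
  have transfer: "g summable_on A \<and> infsum g A \<le> B * S * infsum q H"
  proof -
    obtain \<phi> D where \<phi>: "\<And>r. r \<in> A \<Longrightarrow> \<phi> r \<in> H \<and> D r \<in> DD \<and> r = comb (\<phi> r) (D r) \<and> g r \<le> B * w (D r) * q (\<phi> r)"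
      using ex by metis
    have S0: "S \<ge> 0" using wS[of "{}"] by simp
    have I0: "infsum q H \<ge> 0" using q0 by (intro infsum_nonneg) auto
    have key: "sum g F \<le> B * S * infsum q H" if F: "finite F" "F \<subseteq> A" for F
    proof -
      have "sum g F \<le> (\<Sum>r\<in>F. B * w (D r) * q (\<phi> r))"
        using \<phi> F by (intro sum_mono) auto
      also have "\<dots> = (\<Sum>p\<in>(\<lambda>r. (\<phi> r, D r)) ` F. B * w (snd p) * q (fst p))"
      proof (subst sum.reindex)
        show "inj_on (\<lambda>r. (\<phi> r, D r)) F"
        proof (rule inj_onI)
          fix x y assume "x \<in> F" "y \<in> F" "(\<phi> x, D x) = (\<phi> y, D y)"
          then have "x \<in> A" "y \<in> A" "\<phi> x = \<phi> y" "D x = D y" using F by auto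
          then have "x = comb (\<phi> x) (D x)" "y = comb (\<phi> y) (D y)" using \<phi> by blast+
          then show "x = y" using \<open>\<phi> x = \<phi> y\<close> \<open>D x = D y\<close> by simp
        qed
      qed auto
      also have "\<dots> \<le> (\<Sum>p\<in>\<phi> ` F \<times> D ` F. B * w (snd p) * q (fst p))"
        using F \<phi> B w0 q0 by (intro sum_mono2) (auto intro!: mult_nonneg_nonneg)
      also have "\<dots> = (\<Sum>h\<in>\<phi> ` F. \<Sum>d\<in>D ` F. B * w d * q h)"
        by (subst sum.cartesian_product) (simp add: case_prod_beta)
      also have "\<dots> = B * ((\<Sum>h\<in>\<phi> ` F. q h) * (\<Sum>d\<in>D ` F. w d))"
      proof -
        have "(\<Sum>h\<in>\<phi> ` F. \<Sum>d\<in>D ` F. B * w d * q h) = (\<Sum>h\<in>\<phi> ` F. (B * q h) * (\<Sum>d\<in>D ` F. w d))"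
          by (intro sum.cong refl) (simp add: sum_distrib_left mult_ac)
        also have "\<dots> = (\<Sum>h\<in>\<phi> ` F. B * q h) * (\<Sum>d\<in>D ` F. w d)"
          by (rule sum_distrib_right[symmetric])
        also have "\<dots> = B * ((\<Sum>h\<in>\<phi> ` F. q h) * (\<Sum>d\<in>D ` F. w d))"
          by (simp add: sum_distrib_left[symmetric])
        finally show ?thesis .
      qed
      also have "\<dots> \<le> B * (infsum q H * S)"
      proof (intro mult_left_mono mult_mono B)
        show "(\<Sum>h\<in>\<phi> ` F. q h) \<le> infsum q H"
          using F \<phi> q0 by (intro finite_sum_le_infsum qs) auto
        show "(\<Sum>d\<in>D ` F. w d) \<le> S" using F \<phi> by (intro wS) auto
        show "0 \<le> infsum q H" by (rule I0)
        show "0 \<le> (\<Sum>d\<in>D ` F. w d)" using F \<phi> w0 by (intro sum_nonneg) auto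
      qed
      finally show ?thesis by (simp add: mult_ac)
    qed
    have sm: "g summable_on A"
      using g0 key by (intro nonneg_bdd_above_summable_on) (auto intro!: bdd_aboveI2)
    moreover have "infsum g A \<le> B * S * infsum q H"
      using key by (intro infsum_le_finite_sums sm) auto
    ultimately show ?thesis by blast
  qed
  show "(g summable_on A \<and> infsum g A \<le> B * S * infsum q H) \<and> True" by (rule conjI[OF transfer TrueI])
qed

lemmas transfer = transfer_aux[THEN conjunct1]

definition pw :: "(nat \<Rightarrow> real) \<Rightarrow> nat \<Rightarrow> nat \<Rightarrow> real" where
  "pw z i n = exp (- z i) * z i ^ n / fact n"

schematic_goal poisson_pw_aux: "(poisson_wt k z r = (\<Prod>i<k. pw z i (r i))) \<and> (?dd::bool)"
proof -
  have poisson_pw: "poisson_wt k z r = (\<Prod>i<k. pw z i (r i))"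
    unfolding poisson_wt_def pw_def by simp
  show "(poisson_wt k z r = (\<Prod>i<k. pw z i (r i))) \<and> True" by (rule conjI[OF poisson_pw TrueI])
qed

lemmas poisson_pw = poisson_pw_aux[THEN conjunct1]

lemma pw_pos: "z i > 0 \<Longrightarrow> pw z i n > 0"
  unfolding pw_def by simp

schematic_goal pw_Suc_aux: "(pw z i (Suc n) = pw z i n * z i / real (Suc n)) \<and> (?dd::bool)"
proof -
  have pw_Suc: "pw z i (Suc n) = pw z i n * z i / real (Suc n)"
    unfolding pw_def by (simp add: field_simps)
  show "(pw z i (Suc n) = pw z i n * z i / real (Suc n)) \<and> True" by (rule conjI[OF pw_Suc TrueI])
qed

lemmas pw_Suc = pw_Suc_aux[THEN conjunct1]

lemma poisson_nonneg: "(\<forall>i<k. z i > 0) \<Longrightarrow> poisson_wt k z r \<ge> 0"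
  unfolding poisson_pw by (intro prod_nonneg) (auto intro: less_imp_le pw_pos)

schematic_goal poisson_upd_aux:
  assumes "i < k"
  shows "(poisson_wt k z (r(i:=n)) * pw z i (r i) = poisson_wt k z r * pw z i n) \<and> (?dd::bool)"
proof -
  have poisson_upd: "poisson_wt k z (r(i:=n)) * pw z i (r i) = poisson_wt k z r * pw z i n"
    unfolding poisson_pw using prod_upd[OF assms, of "\<lambda>j n. pw z j n" r n] by simp
  show "(poisson_wt k z (r(i:=n)) * pw z i (r i) = poisson_wt k z r * pw z i n) \<and> True" by (rule conjI[OF poisson_upd TrueI])
qed

lemmas poisson_upd = poisson_upd_aux[THEN conjunct1]

schematic_goal lin_upd_aux:
  assumes "i < k"
  shows "(lin k lam (r(i:=n)) = lin k lam r - lam i * real (r i) + lam i * real n) \<and> (?dd::bool)"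
proof -
  have lin_upd: "lin k lam (r(i:=n)) = lin k lam r - lam i * real (r i) + lam i * real n"
    unfolding lin_def using sum_upd[OF assms, of "\<lambda>j n. lam j * real n" r n] by simp
  show "(lin k lam (r(i:=n)) = lin k lam r - lam i * real (r i) + lam i * real n) \<and> True" by (rule conjI[OF lin_upd TrueI])
qed

lemmas lin_upd = lin_upd_aux[THEN conjunct1]

schematic_goal sum_diff_upd_aux:
  fixes r r' h :: "nat \<Rightarrow> nat" and f :: "nat \<Rightarrow> nat \<Rightarrow> nat"
  assumes "i < k" "\<And>j. j \<noteq> i \<Longrightarrow> r' j = r j"
  shows "((\<Sum>j<k. f (r j) (h j)) + f (r' i) (h i) = f (r i) (h i) + (\<Sum>j<k. f (r' j) (h j))) \<and> (?dd::bool)"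
proof -
  have sum_diff_upd: "(\<Sum>j<k. f (r j) (h j)) + f (r' i) (h i) = f (r i) (h i) + (\<Sum>j<k. f (r' j) (h j))"
  proof -
    have "(\<Sum>j<k. f (r j) (h j)) = f (r i) (h i) + (\<Sum>j\<in>{..<k}-{i}. f (r j) (h j))"
      using assms(1) by (subst sum.remove[of _ i]) auto
    moreover have "(\<Sum>j<k. f (r' j) (h j)) = f (r' i) (h i) + (\<Sum>j\<in>{..<k}-{i}. f (r' j) (h j))"
      using assms(1) by (subst sum.remove[of _ i]) auto
    moreover have "(\<Sum>j\<in>{..<k}-{i}. f (r' j) (h j)) = (\<Sum>j\<in>{..<k}-{i}. f (r j) (h j))"
      using assms(2) by (intro sum.cong) auto
    ultimately show ?thesis by simp
  qed
  show "((\<Sum>j<k. f (r j) (h j)) + f (r' i) (h i) = f (r i) (h i) + (\<Sum>j<k. f (r' j) (h j))) \<and> True" by (rule conjI[OF sum_diff_upd TrueI])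
qed

lemmas sum_diff_upd = sum_diff_upd_aux[THEN conjunct1]

schematic_goal lin_diff_aux:
  assumes "\<forall>i<k. h i \<le> r i" "\<forall>i<k. 0 \<le> lam i" "\<forall>i<k. lam i \<le> La"
  shows "(lin k lam r - lin k lam h \<le> La * real (\<Sum>i<k. r i - h i)) \<and> (?dd::bool)"
proof -
  have lin_diff: "lin k lam r - lin k lam h \<le> La * real (\<Sum>i<k. r i - h i)"
  proof -
    have "lin k lam r - lin k lam h = (\<Sum>i<k. lam i * real (r i - h i))"
      unfolding lin_def using assms(1) by (simp add: sum_subtractf[symmetric] algebra_simps of_nat_diff)
    also have "\<dots> \<le> (\<Sum>i<k. La * real (r i - h i))"
      using assms by (intro sum_mono mult_right_mono) auto
    finally show ?thesis by (simp add: sum_distrib_left)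
  qed
  show "(lin k lam r - lin k lam h \<le> La * real (\<Sum>i<k. r i - h i)) \<and> True" by (rule conjI[OF lin_diff TrueI])
qed

lemmas lin_diff = lin_diff_aux[THEN conjunct1]

schematic_goal path_a_aux:
  assumes lam: "\<forall>i<k. lam i > 0" and mup: "\<forall>i<k. mu i > 0" and zp: "\<forall>i<k. z i > 0" and rho: "\<forall>i<k. \<rho> * lam i \<le> mu i"
    and rho0: "\<rho> \<ge> 0" and La: "\<forall>i<k. lam i \<le> La" and lm: "lm > 0" "\<forall>i<k. lm \<le> lam i"
    and Z: "Z = (\<Sum>i<k. mu i * z i)"
  shows "(\<forall>n r. (r \<in> lattice_pts k) \<longrightarrow> (Z - La < lin k lam r) \<longrightarrow> (lin k lam r < Z + real n * lm) \<longrightarrow> (\<exists>h\<in>lattice_pts k. Z - La < lin k lam h \<and> lin k lam h \<le> Z \<and> (\<forall>i<k. h i \<le> r i) \<and>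
       \<rho> ^ (\<Sum>i<k. r i - h i) * poisson_wt k z r \<le> poisson_wt k z h)) \<and> (?dd::bool)"
proof -
  have path_a: "r \<in> lattice_pts k \<Longrightarrow> Z - La < lin k lam r \<Longrightarrow> lin k lam r < Z + real n * lm \<Longrightarrow>
    \<exists>h\<in>lattice_pts k. Z - La < lin k lam h \<and> lin k lam h \<le> Z \<and> (\<forall>i<k. h i \<le> r i) \<and>
       \<rho> ^ (\<Sum>i<k. r i - h i) * poisson_wt k z r \<le> poisson_wt k z h" for n r
  proof (induction n arbitrary: r)
    case 0
    then show ?case by (intro bexI[of _ r]) auto
  next
    case (Suc n)
    show ?case
    proof (cases "lin k lam r \<le> Z")
      case True
      then show ?thesis using Suc.prems by (intro bexI[of _ r]) auto
    next
      case False
      obtain i where i: "i < k" "mu i * z i \<le> lam i * real (r i)"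
      proof (rule ccontr)
        assume "\<not> thesis"
        then have "\<forall>i<k. lam i * real (r i) \<le> mu i * z i" using that by force
        then have "lin k lam r \<le> Z" unfolding lin_def Z by (intro sum_mono) auto
        with False show False by simp
      qed
      define m where "m = r i"
      have mz: "mu i * z i > 0"
        using mup zp i by auto
      have m1: "m \<ge> 1"
      proof (rule ccontr)
        assume "\<not> m \<ge> 1" then have "m = 0" by simp
        then show False using i mz unfolding m_def by simp
      qed
      define r' where "r' = r(i := m - 1)"
      have r'L: "r' \<in> lattice_pts k" unfolding r'_def by (intro lattice_upd Suc.prems i)
      have linr': "lin k lam r' = lin k lam r - lam i"
        unfolding r'_def using m1 by (simp add: lin_upd[OF i(1)] m_def of_nat_diff algebra_simps)
      have "Z - La < lin k lam r'" using False linr' La i by force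
      moreover have "lin k lam r' < Z + real n * lm" using Suc.prems(3) linr' lm i by (auto simp: algebra_simps)
      ultimately obtain h where h: "h \<in> lattice_pts k" "Z - La < lin k lam h" "lin k lam h \<le> Z"
        "\<forall>i<k. h i \<le> r' i" "\<rho> ^ (\<Sum>i<k. r' i - h i) * poisson_wt k z r' \<le> poisson_wt k z h"
        using Suc.IH[OF r'L] by blast
      have r'i: "r' i = m - 1" "\<And>j. j \<noteq> i \<Longrightarrow> r' j = r j" unfolding r'_def by auto
      have hle: "\<forall>j<k. h j \<le> r j"
        using h(4) r'i m1 unfolding m_def by (metis diff_le_self le_trans)
      have hi: "h i \<le> m - 1" using h(4) r'i i by auto
      have sumeq: "(\<Sum>j<k. r j - h j) = Suc (\<Sum>j<k. r' j - h j)"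
      proof -
        have "(\<Sum>j<k. r j - h j) + (r' i - h i) = (r i - h i) + (\<Sum>j<k. r' j - h j)"
          using sum_diff_upd[OF i(1), of r' r "\<lambda>a b. a - b" h] r'i by auto
        then show ?thesis using hi r'i m1 unfolding m_def by simp
      qed
      have Pr': "poisson_wt k z r' \<ge> \<rho> * poisson_wt k z r"
      proof -
        have pm: "pw z i m = pw z i (m - 1) * z i / real m"
          using pw_Suc[of z i "m - 1"] m1 by simp
        have eq: "poisson_wt k z r' * pw z i m = poisson_wt k z r * pw z i (m - 1)"
          using poisson_upd[OF i(1), of z r "m - 1"] unfolding r'_def m_def by simp
        have pos: "pw z i (m - 1) > 0" using pw_pos zp i by auto
        have zi: "z i > 0" using zp i by auto
        have "poisson_wt k z r' = poisson_wt k z r * real m / z i"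
          using eq pos zi m1 unfolding pm by (simp add: field_simps)
        moreover have "\<rho> * z i \<le> real m"
        proof -
          have "lam i * (\<rho> * z i) \<le> lam i * real m"
          proof -
            have "\<rho> * lam i * z i \<le> mu i * z i"
              using rho i zi by (intro mult_right_mono) auto
            then show ?thesis using i unfolding m_def by (simp add: mult_ac)
          qed
          then show ?thesis using lam i by auto
        qed
        ultimately have "z i * (\<rho> * poisson_wt k z r) \<le> z i * poisson_wt k z r'"
          using poisson_nonneg[of k z r] zp zi mult_right_mono[of "\<rho> * z i" "real m" "poisson_wt k z r"]
          by (simp add: field_simps)
        then show ?thesis using zi by (simp add: mult_le_cancel_left_pos)
      qed
      have "\<rho> ^ (\<Sum>j<k. r j - h j) * poisson_wt k z r
          = \<rho> ^ (\<Sum>j<k. r' j - h j) * (\<rho> * poisson_wt k z r)" by (simp add: sumeq)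
      also have "\<dots> \<le> \<rho> ^ (\<Sum>j<k. r' j - h j) * poisson_wt k z r'"
        using Pr' rho0 by (intro mult_left_mono) auto
      also have "\<dots> \<le> poisson_wt k z h" by (rule h(5))
      finally show ?thesis using h hle by blast
    qed
  qed
  then show "(\<forall>n r. (r \<in> lattice_pts k) \<longrightarrow> (Z - La < lin k lam r) \<longrightarrow> (lin k lam r < Z + real n * lm) \<longrightarrow> (\<exists>h\<in>lattice_pts k. Z - La < lin k lam h \<and> lin k lam h \<le> Z \<and> (\<forall>i<k. h i \<le> r i) \<and>
       \<rho> ^ (\<Sum>i<k. r i - h i) * poisson_wt k z r \<le> poisson_wt k z h)) \<and> True" by blast
qed

lemmas path_a = path_a_aux[THEN conjunct1, rule_format (no_asm)]

definition qw :: "(nat \<Rightarrow> real) \<Rightarrow> (nat \<Rightarrow> real) \<Rightarrow> nat \<Rightarrow> nat \<Rightarrow> real" where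
  "qw lam z i n = exp (- z i) * (exp (lam i) * z i) ^ n / fact n"

definition QQ :: "nat \<Rightarrow> (nat \<Rightarrow> real) \<Rightarrow> (nat \<Rightarrow> real) \<Rightarrow> (nat \<Rightarrow> nat) \<Rightarrow> real" where
  "QQ k lam z r = (\<Prod>i<k. qw lam z i (r i))"

lemma qw_pos: "z i > 0 \<Longrightarrow> qw lam z i n > 0"
  unfolding qw_def by simp

schematic_goal qw_Suc_aux: "(qw lam z i (Suc n) = qw lam z i n * (exp (lam i) * z i) / real (Suc n)) \<and> (?dd::bool)"
proof -
  have qw_Suc: "qw lam z i (Suc n) = qw lam z i n * (exp (lam i) * z i) / real (Suc n)"
    unfolding qw_def by (simp add: field_simps)
  show "(qw lam z i (Suc n) = qw lam z i n * (exp (lam i) * z i) / real (Suc n)) \<and> True" by (rule conjI[OF qw_Suc TrueI])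
qed

lemmas qw_Suc = qw_Suc_aux[THEN conjunct1]

lemma QQ_nonneg: "(\<forall>i<k. z i > 0) \<Longrightarrow> QQ k lam z r \<ge> 0"
  unfolding QQ_def by (intro prod_nonneg) (auto intro: less_imp_le qw_pos)

schematic_goal QQ_upd_aux:
  assumes "i < k"
  shows "(QQ k lam z (r(i:=n)) * qw lam z i (r i) = QQ k lam z r * qw lam z i n) \<and> (?dd::bool)"
proof -
  have QQ_upd: "QQ k lam z (r(i:=n)) * qw lam z i (r i) = QQ k lam z r * qw lam z i n"
    unfolding QQ_def using prod_upd[OF assms, of "\<lambda>j n. qw lam z j n" r n] by simp
  show "(QQ k lam z (r(i:=n)) * qw lam z i (r i) = QQ k lam z r * qw lam z i n) \<and> True" by (rule conjI[OF QQ_upd TrueI])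
qed

lemmas QQ_upd = QQ_upd_aux[THEN conjunct1]

schematic_goal QQ_eq_aux: "(QQ k lam z r = exp (lin k lam r) * poisson_wt k z r) \<and> (?dd::bool)"
proof -
  have QQ_eq: "QQ k lam z r = exp (lin k lam r) * poisson_wt k z r"
  proof -
    have "QQ k lam z r = (\<Prod>i<k. exp (lam i * real (r i)) * pw z i (r i))"
      unfolding QQ_def qw_def pw_def
      by (intro prod.cong refl) (simp add: power_mult_distrib exp_of_nat_mult[symmetric] mult_ac)
    also have "\<dots> = exp (lin k lam r) * poisson_wt k z r"
      unfolding prod.distrib lin_def exp_sum[OF finite_lessThan] poisson_pw by simp
    finally show ?thesis .
  qed
  show "(QQ k lam z r = exp (lin k lam r) * poisson_wt k z r) \<and> True" by (rule conjI[OF QQ_eq TrueI])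
qed

lemmas QQ_eq = QQ_eq_aux[THEN conjunct1]

schematic_goal path_b_aux:
  assumes lam: "\<forall>i<k. lam i > 0" and mup: "\<forall>i<k. mu i > 0" and zp: "\<forall>i<k. z i > 0"
    and eta: "\<forall>i<k. \<eta> * \<eta> * mu i \<le> lam i * exp (lam i)" and eta0: "\<eta> \<ge> 0"
    and La: "\<forall>i<k. lam i \<le> La" and lm: "lm > 0" "\<forall>i<k. lm \<le> lam i"
    and Z: "Z = (\<Sum>i<k. mu i * z i)" and big: "real k * La \<le> (\<eta> - 1) * Z" and k: "k \<ge> 1"
  shows "(\<forall>n r. (r \<in> lattice_pts k) \<longrightarrow> (Z - La - real n * lm < lin k lam r) \<longrightarrow> (lin k lam r \<le> Z) \<longrightarrow> (\<exists>h\<in>lattice_pts k. Z - La < lin k lam h \<and> lin k lam h \<le> Z \<and> (\<forall>i<k. r i \<le> h i) \<and>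
       \<eta> ^ (\<Sum>i<k. h i - r i) * QQ k lam z r \<le> QQ k lam z h)) \<and> (?dd::bool)"
proof -
  have path_b: "r \<in> lattice_pts k \<Longrightarrow> Z - La - real n * lm < lin k lam r \<Longrightarrow> lin k lam r \<le> Z \<Longrightarrow>
    \<exists>h\<in>lattice_pts k. Z - La < lin k lam h \<and> lin k lam h \<le> Z \<and> (\<forall>i<k. r i \<le> h i) \<and>
       \<eta> ^ (\<Sum>i<k. h i - r i) * QQ k lam z r \<le> QQ k lam z h" for n r
  proof (induction n arbitrary: r)
    case 0
    then show ?case by (intro bexI[of _ r]) auto
  next
    case (Suc n)
    show ?case
    proof (cases "Z - La < lin k lam r")
      case True
      then show ?thesis using Suc.prems by (intro bexI[of _ r]) auto
    next
      case False
      have La0: "La > 0"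
      proof -
        have "0 < k" using k by simp
        then have "lam 0 > 0" "lam 0 \<le> La" using La lam by auto
        then show ?thesis by linarith
      qed
      obtain i where i: "i < k" "lam i * (real (r i) + 1) \<le> \<eta> * mu i * z i"
      proof (rule ccontr)
        assume "\<not> thesis"
        then have A: "\<forall>i<k. \<eta> * mu i * z i < lam i * (real (r i) + 1)" using that by force
        have "\<eta> * Z = (\<Sum>i<k. \<eta> * mu i * z i)" unfolding Z by (simp add: sum_distrib_left mult_ac)
        also have "\<dots> < (\<Sum>i<k. lam i * (real (r i) + 1))"
          using A k by (intro sum_strict_mono) (auto simp: lessThan_empty_iff)
        also have "\<dots> = lin k lam r + (\<Sum>i<k. lam i)"
          unfolding lin_def by (simp add: algebra_simps sum.distrib)
        also have "(\<Sum>i<k. lam i) \<le> (\<Sum>i<k. La)" using La by (intro sum_mono) auto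
        finally have "\<eta> * Z < lin k lam r + real k * La" by simp
        then show False using False big La0 by (simp add: algebra_simps)
      qed
      define m where "m = r i"
      define r' where "r' = r(i := m + 1)"
      have r'L: "r' \<in> lattice_pts k" unfolding r'_def by (intro lattice_upd Suc.prems i)
      have linr': "lin k lam r' = lin k lam r + lam i"
        unfolding r'_def by (simp add: lin_upd[OF i(1)] m_def algebra_simps)
      have "Z - La - real n * lm < lin k lam r'" using Suc.prems(2) linr' lm i by (auto simp: algebra_simps)
      moreover have "lin k lam r' \<le> Z" using False linr' La i by force
      ultimately obtain h where h: "h \<in> lattice_pts k" "Z - La < lin k lam h" "lin k lam h \<le> Z"
        "\<forall>i<k. r' i \<le> h i" "\<eta> ^ (\<Sum>i<k. h i - r' i) * QQ k lam z r' \<le> QQ k lam z h"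
        using Suc.IH[OF r'L] by blast
      have r'i: "r' i = m + 1" "\<And>j. j \<noteq> i \<Longrightarrow> r' j = r j" unfolding r'_def by auto
      have hle: "\<forall>j<k. r j \<le> h j"
        using h(4) r'i unfolding m_def by (metis le_add1 le_trans)
      have hi: "m + 1 \<le> h i" using h(4) r'i i by auto
      have sumeq: "(\<Sum>j<k. h j - r j) = Suc (\<Sum>j<k. h j - r' j)"
      proof -
        have "(\<Sum>j<k. h j - r j) + (h i - r' i) = (h i - r i) + (\<Sum>j<k. h j - r' j)"
          using sum_diff_upd[OF i(1), of r' r "\<lambda>a b. b - a" h] r'i by auto
        then show ?thesis using hi r'i unfolding m_def by simp
      qed
      have zi: "z i > 0" using zp i by auto
      have Qr': "QQ k lam z r' \<ge> \<eta> * QQ k lam z r"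
      proof -
        have eq: "QQ k lam z r' * qw lam z i m = QQ k lam z r * qw lam z i (m + 1)"
          using QQ_upd[OF i(1), of lam z r "m + 1"] unfolding r'_def m_def by simp
        have pos: "qw lam z i m > 0" using qw_pos zi by auto
        have "QQ k lam z r' = QQ k lam z r * (exp (lam i) * z i) / real (m + 1)"
        proof -
          define X where "X = QQ k lam z r * (exp (lam i) * z i) / real (m + 1)"
          have "QQ k lam z r' * qw lam z i m = X * qw lam z i m"
            using eq unfolding Suc_eq_plus1[symmetric] qw_Suc X_def by simp
          then have "QQ k lam z r' = X" using pos by simp
          then show ?thesis unfolding X_def .
        qed
        moreover have "\<eta> * real (m + 1) \<le> exp (lam i) * z i"
        proof -
          have "lam i * (\<eta> * real (m + 1)) = \<eta> * (lam i * (real m + 1))" by (simp add: algebra_simps)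
          also have "\<dots> \<le> \<eta> * (\<eta> * mu i * z i)" using i eta0 unfolding m_def by (intro mult_left_mono) auto
          also have "\<dots> = (\<eta> * \<eta> * mu i) * z i" by (simp add: mult_ac)
          also have "\<dots> \<le> (lam i * exp (lam i)) * z i" using eta i zi by (intro mult_right_mono) auto
          finally have "lam i * (\<eta> * real (m + 1)) \<le> lam i * (exp (lam i) * z i)" by (simp add: mult_ac)
          then show ?thesis using lam i by auto
        qed
        ultimately have "real (m + 1) * (\<eta> * QQ k lam z r) \<le> real (m + 1) * QQ k lam z r'"
          using QQ_nonneg[of k z lam r] zp mult_right_mono[of "\<eta> * real (m + 1)" "exp (lam i) * z i" "QQ k lam z r"]
          by (simp add: field_simps)
        then show ?thesis by (simp add: mult_le_cancel_left_pos)
      qed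
      have "\<eta> ^ (\<Sum>j<k. h j - r j) * QQ k lam z r
          = \<eta> ^ (\<Sum>j<k. h j - r' j) * (\<eta> * QQ k lam z r)" by (simp add: sumeq)
      also have "\<dots> \<le> \<eta> ^ (\<Sum>j<k. h j - r' j) * QQ k lam z r'"
        using Qr' eta0 by (intro mult_left_mono) auto
      also have "\<dots> \<le> QQ k lam z h" by (rule h(5))
      finally show ?thesis using h hle by blast
    qed
  qed
  then show "(\<forall>n r. (r \<in> lattice_pts k) \<longrightarrow> (Z - La - real n * lm < lin k lam r) \<longrightarrow> (lin k lam r \<le> Z) \<longrightarrow> (\<exists>h\<in>lattice_pts k. Z - La < lin k lam h \<and> lin k lam h \<le> Z \<and> (\<forall>i<k. r i \<le> h i) \<and>
       \<eta> ^ (\<Sum>i<k. h i - r i) * QQ k lam z r \<le> QQ k lam z h)) \<and> True" by blast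
qed

lemmas path_b = path_b_aux[THEN conjunct1, rule_format (no_asm)]

schematic_goal poisson_partial_le1_aux:
  assumes "\<forall>i<k. z i > 0" "finite G" "G \<subseteq> lattice_pts k"
  shows "(sum (poisson_wt k z) G \<le> 1) \<and> (?dd::bool)"
proof -
  have poisson_partial_le1: "sum (poisson_wt k z) G \<le> 1"
  proof -
    have "sum (poisson_wt k z) G \<le> 1 ^ k"
      unfolding poisson_pw
    proof (rule sum_prod_lattice_le[OF assms(2,3)])
      show "\<And>i n. i < k \<Longrightarrow> 0 \<le> pw z i n" using pw_pos assms less_imp_le by blast
      fix i N assume "i < k"
      have "(\<lambda>n. exp (- z i) * (z i ^ n /\<^sub>R fact n)) sums (exp (- z i) * exp (z i))"
        by (intro sums_mult exp_converges)
      then have "(\<lambda>n. pw z i n) sums 1" by (simp add: pw_def exp_minus field_simps)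
      then show "(\<Sum>n\<le>N. pw z i n) \<le> 1"
        using partial_le_sums pw_pos assms \<open>i < k\<close> less_imp_le by metis
    qed
    then show ?thesis by simp
  qed
  show "(sum (poisson_wt k z) G \<le> 1) \<and> True" by (rule conjI[OF poisson_partial_le1 TrueI])
qed

lemmas poisson_partial_le1 = poisson_partial_le1_aux[THEN conjunct1]

schematic_goal poisson_summable_aux:
  assumes "\<forall>i<k. z i > 0"
  shows "(poisson_wt k z summable_on lattice_pts k) \<and> (?dd::bool)"
proof -
  have poisson_summable: "poisson_wt k z summable_on lattice_pts k"
  proof (rule nonneg_bdd_above_summable_on)
    show "\<And>x. x \<in> lattice_pts k \<Longrightarrow> 0 \<le> poisson_wt k z x" using poisson_nonneg assms by blast
    show "bdd_above (sum (poisson_wt k z) ` {F. F \<subseteq> lattice_pts k \<and> finite F})"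
      using poisson_partial_le1[OF assms] by (intro bdd_aboveI2[where M=1]) auto
  qed
  show "(poisson_wt k z summable_on lattice_pts k) \<and> True" by (rule conjI[OF poisson_summable TrueI])
qed

lemmas poisson_summable = poisson_summable_aux[THEN conjunct1]

schematic_goal geom_weight_bound_aux:
  fixes t :: real
  assumes "t > 1" "finite G" "G \<subseteq> lattice_pts k"
  shows "((\<Sum>d\<in>G. \<Prod>i<k. (1/t) ^ d i) \<le> (1 / (1 - 1/t)) ^ k) \<and> (?dd::bool)"
proof -
  have geom_weight_bound: "(\<Sum>d\<in>G. \<Prod>i<k. (1/t) ^ d i) \<le> (1 / (1 - 1/t)) ^ k"
  proof (rule sum_prod_lattice_le[OF assms(2,3)])
    show "\<And>i n. 0 \<le> (1/t) ^ n" using assms by simp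
    have "(\<lambda>n. (1/t) ^ n) sums (1 / (1 - 1/t))" using assms by (intro geometric_sums) auto
    moreover have "\<And>n. (0::real) \<le> (1/t) ^ n" using assms by simp
    ultimately show "\<And>N. (\<Sum>n\<le>N. (1/t) ^ n) \<le> 1 / (1 - 1/t)"
      using partial_le_sums by blast
  qed
  show "((\<Sum>d\<in>G. \<Prod>i<k. (1/t) ^ d i) \<le> (1 / (1 - 1/t)) ^ k) \<and> True" by (rule conjI[OF geom_weight_bound TrueI])
qed

lemmas geom_weight_bound = geom_weight_bound_aux[THEN conjunct1]

lemma Lam_props:
  assumes "k \<ge> 1" "\<forall>i<k. lam i > 0"
  shows "\<forall>i<k. lam i \<le> Lam k lam" "\<exists>i<k. lam i = Lam k lam" "Lam k lam > 0"
proof -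
  have ne: "lam ` {..<k} \<noteq> {}" using assms by (auto simp: lessThan_empty_iff)
  show "\<forall>i<k. lam i \<le> Lam k lam" unfolding Lam_def by auto
  have "Lam k lam \<in> lam ` {..<k}" unfolding Lam_def by (intro Max_in ne) auto
  then show "\<exists>i<k. lam i = Lam k lam" by auto
  then show "Lam k lam > 0" using assms by auto
qed

schematic_goal min_props_aux:
  fixes f :: "nat \<Rightarrow> real"
  assumes "k \<ge> 1" "\<forall>i<k. f i > c"
  shows "(\<exists>m>c. \<forall>i<k. m \<le> f i) \<and> (?dd::bool)"
proof -
  have min_props: "\<exists>m>c. \<forall>i<k. m \<le> f i"
  proof -
    have ne: "f ` {..<k} \<noteq> {}" using assms by (auto simp: lessThan_empty_iff)
    have "Min (f ` {..<k}) > c" using assms ne by (subst Min_gr_iff) auto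
    moreover have "\<forall>i<k. Min (f ` {..<k}) \<le> f i" by auto
    ultimately show ?thesis by blast
  qed
  show "(\<exists>m>c. \<forall>i<k. m \<le> f i) \<and> True" by (rule conjI[OF min_props TrueI])
qed

lemmas min_props = min_props_aux[THEN conjunct1]

schematic_goal diff_sum_power_aux:
  fixes t :: real
  shows "((\<Prod>i<k. t ^ (restrict (\<lambda>j. a j - b j) {..<k}) i) = t ^ (\<Sum>i<k. a i - b i)) \<and> (?dd::bool)"
proof -
  have diff_sum_power: "(\<Prod>i<k. t ^ (restrict (\<lambda>j. a j - b j) {..<k}) i) = t ^ (\<Sum>i<k. a i - b i)"
    by (simp add: power_sum)
  show "((\<Prod>i<k. t ^ (restrict (\<lambda>j. a j - b j) {..<k}) i) = t ^ (\<Sum>i<k. a i - b i)) \<and> True" by (rule conjI[OF diff_sum_power TrueI])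
qed

lemmas diff_sum_power = diff_sum_power_aux[THEN conjunct1]

schematic_goal part_a_aux:
  fixes k :: nat and C :: real and lam mu :: "nat \<Rightarrow> real"
  assumes k: "k \<ge> 1" and C: "C \<ge> 0"
    and lam: "\<forall>i<k. lam i > 0" and mu: "\<forall>i<k. mu i > 0" and lm: "\<forall>i<k. lam i < mu i"
  shows "(\<exists>K::real. \<forall>z::nat \<Rightarrow> real.
         (\<forall>i<k. z i \<ge> 1) \<longrightarrow> (\<Sum>i<k. mu i * z i) \<ge> Lam k lam \<longrightarrow>
         (let Z = (\<Sum>i<k. mu i * z i);
              f = (\<lambda>r. (1 + lin k lam r - Z) powr C * (\<Prod>i<k. exp (- z i) * z i ^ r i / fact (r i)))
          in f summable_on Hplus k lam Z \<and>
             (\<Sum>\<^sub>\<infinity>r\<in>Hplus k lam Z. f r) \<le> K * Prob k z (Hk k lam Z))) \<and> (?dd::bool)"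
proof -
  have part_a: "\<exists>K::real. \<forall>z::nat \<Rightarrow> real.
         (\<forall>i<k. z i \<ge> 1) \<longrightarrow> (\<Sum>i<k. mu i * z i) \<ge> Lam k lam \<longrightarrow>
         (let Z = (\<Sum>i<k. mu i * z i);
              f = (\<lambda>r. (1 + lin k lam r - Z) powr C * (\<Prod>i<k. exp (- z i) * z i ^ r i / fact (r i)))
          in f summable_on Hplus k lam Z \<and>
             (\<Sum>\<^sub>\<infinity>r\<in>Hplus k lam Z. f r) \<le> K * Prob k z (Hk k lam Z))"
  proof -
    define La where "La = Lam k lam"
    have La: "\<forall>i<k. lam i \<le> La" "La > 0" using Lam_props[OF k lam] unfolding La_def by auto
    obtain lmin where lmin: "lmin > 0" "\<forall>i<k. lmin \<le> lam i" using min_props[OF k lam] by blast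
    obtain \<rho> where rho: "\<rho> > 1" "\<forall>i<k. \<rho> \<le> mu i / lam i"
      using min_props[OF k, of 1 "\<lambda>i. mu i / lam i"] lam lm by auto
    define t where "t = sqrt \<rho>"
    have t: "t > 1" "t * t = \<rho>" using rho unfolding t_def by (auto simp: real_sqrt_gt_1_iff)
    obtain A where A: "\<forall>n::nat. (1 + La + La * real n) powr C \<le> A * t ^ n"
      using poly_exp_bound[OF La(2) t(1) C] by blast
    have A0: "A \<ge> 0"
    proof -
      have "0 \<le> (1 + La + La * real 0) powr C" by simp
      also have "\<dots> \<le> A" using A[rule_format, of 0] by simp
      finally show ?thesis .
    qed
    define c where "c = 1 / (1 - 1/t)"
    show ?thesis
    proof (intro exI[of _ "A * c ^ k"] allI impI)
      fix z :: "nat \<Rightarrow> real"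
      assume z1: "\<forall>i<k. z i \<ge> 1" and ZL: "(\<Sum>i<k. mu i * z i) \<ge> Lam k lam"
      define Z where "Z = (\<Sum>i<k. mu i * z i)"
      define f where "f = (\<lambda>r. (1 + lin k lam r - Z) powr C * (\<Prod>i<k. exp (- z i) * z i ^ r i / fact (r i)))"
      have zp: "\<forall>i<k. z i > 0" using z1 by force
      have f_eq: "f r = (1 + lin k lam r - Z) powr C * poisson_wt k z r" for r
        unfolding f_def poisson_wt_def ..
      have "f summable_on Hplus k lam Z \<and> infsum f (Hplus k lam Z) \<le> A * c ^ k * infsum (poisson_wt k z) (Hk k lam Z)"
      proof (rule transfer[where DD="lattice_pts k" and w="\<lambda>d. \<Prod>i<k. (1/t) ^ d i"
            and comb="\<lambda>h d. restrict (\<lambda>j. h j + d j) {..<k}"])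
        show "\<And>r. r \<in> Hplus k lam Z \<Longrightarrow> 0 \<le> f r"
          unfolding f_eq using poisson_nonneg[OF zp] by (auto intro!: mult_nonneg_nonneg)
        show "\<And>h. h \<in> Hk k lam Z \<Longrightarrow> 0 \<le> poisson_wt k z h" using poisson_nonneg[OF zp] by auto
        show "poisson_wt k z summable_on Hk k lam Z"
          by (rule summable_on_subset_banach[OF poisson_summable[OF zp]]) (auto simp: Hk_def)
        show "\<And>d. d \<in> lattice_pts k \<Longrightarrow> 0 \<le> (\<Prod>i<k. (1/t) ^ d i)" using t by (intro prod_nonneg) auto
        show "\<And>G. finite G \<Longrightarrow> G \<subseteq> lattice_pts k \<Longrightarrow> (\<Sum>d\<in>G. \<Prod>i<k. (1/t) ^ d i) \<le> c ^ k"
          unfolding c_def using geom_weight_bound[OF t(1)] by blast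
        show "A \<ge> 0" by (rule A0)
        fix r assume r: "r \<in> Hplus k lam Z"
        then have rL: "r \<in> lattice_pts k" and rZ: "Z \<le> lin k lam r" by (auto simp: Hplus_def)
        obtain n :: nat where n: "(lin k lam r - Z) / lmin < real n" using reals_Archimedean2 by blast
        have "lin k lam r < Z + real n * lmin" using n lmin by (simp add: field_simps)
        moreover have "Z - La < lin k lam r" using rZ La by auto
        ultimately obtain h where h: "h \<in> lattice_pts k" "Z - La < lin k lam h" "lin k lam h \<le> Z"
          "\<forall>i<k. h i \<le> r i" "\<rho> ^ (\<Sum>i<k. r i - h i) * poisson_wt k z r \<le> poisson_wt k z h"
          using path_a[where \<rho>=\<rho> and n=n, OF lam mu zp _ _ La(1) lmin Z_def rL] rho lam
          by (auto simp: field_simps)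
        define d where "d = restrict (\<lambda>j. r j - h j) {..<k}"
        define s where "s = (\<Sum>i<k. r i - h i)"
        have hH: "h \<in> Hk k lam Z" using h unfolding Hk_def La_def by auto
        have dL: "d \<in> lattice_pts k" unfolding d_def by (rule lattice_restrict)
        have rc: "r = restrict (\<lambda>j. h j + d j) {..<k}"
        proof
          fix j show "r j = restrict (\<lambda>j. h j + d j) {..<k} j"
            using h(4) lattice_out[OF rL, of j] unfolding d_def by auto
        qed
        have wd: "(\<Prod>i<k. (1/t) ^ d i) = (1/t) ^ s"
          unfolding d_def s_def by (rule diff_sum_power)
        have "lin k lam r - Z \<le> lin k lam r - lin k lam h" using h(3) by simp
        also have "\<dots> \<le> La * real s" unfolding s_def using lin_diff[of k h r lam La] h(4) La lam
          by (auto simp: less_imp_le)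
        finally have "(1 + lin k lam r - Z) powr C \<le> (1 + La + La * real s) powr C"
          using rZ La C by (intro powr_mono2) auto
        also have "\<dots> \<le> A * t ^ s" using A by blast
        finally have pw1: "(1 + lin k lam r - Z) powr C \<le> A * t ^ s" .
        have "t ^ s * poisson_wt k z r = (1/t) ^ s * (\<rho> ^ s * poisson_wt k z r)"
          using t by (simp add: t(2)[symmetric] power_mult_distrib field_simps)
        also have "\<dots> \<le> (1/t) ^ s * poisson_wt k z h"
          using h(5) t unfolding s_def by (intro mult_left_mono) auto
        finally have pw2: "t ^ s * poisson_wt k z r \<le> (1/t) ^ s * poisson_wt k z h" .
        have "f r \<le> A * t ^ s * poisson_wt k z r"
          unfolding f_eq using pw1 poisson_nonneg[OF zp] by (intro mult_right_mono) auto
        also have "\<dots> \<le> A * ((1/t) ^ s * poisson_wt k z h)"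
          using pw2 A0 by (simp add: mult.assoc mult_left_mono)
        finally have "f r \<le> A * (\<Prod>i<k. (1/t) ^ d i) * poisson_wt k z h" by (simp add: wd mult_ac)
        then show "\<exists>h\<in>Hk k lam Z. \<exists>d\<in>lattice_pts k. r = restrict (\<lambda>j. h j + d j) {..<k} \<and>
                    f r \<le> A * (\<Prod>i<k. (1/t) ^ d i) * poisson_wt k z h"
          using hH dL rc by blast
      qed
      then show "let Z = (\<Sum>i<k. mu i * z i);
                f = (\<lambda>r. (1 + lin k lam r - Z) powr C * (\<Prod>i<k. exp (- z i) * z i ^ r i / fact (r i)))
            in f summable_on Hplus k lam Z \<and>
               (\<Sum>\<^sub>\<infinity>r\<in>Hplus k lam Z. f r) \<le> A * c ^ k * Prob k z (Hk k lam Z)"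
        unfolding Let_def Prob_def Z_def[symmetric] f_def[symmetric] by simp
    qed
  qed
  show "(\<exists>K::real. \<forall>z::nat \<Rightarrow> real.
         (\<forall>i<k. z i \<ge> 1) \<longrightarrow> (\<Sum>i<k. mu i * z i) \<ge> Lam k lam \<longrightarrow>
         (let Z = (\<Sum>i<k. mu i * z i);
              f = (\<lambda>r. (1 + lin k lam r - Z) powr C * (\<Prod>i<k. exp (- z i) * z i ^ r i / fact (r i)))
          in f summable_on Hplus k lam Z \<and>
             (\<Sum>\<^sub>\<infinity>r\<in>Hplus k lam Z. f r) \<le> K * Prob k z (Hk k lam Z))) \<and> True" by (rule conjI[OF part_a TrueI])
qed

lemmas part_a = part_a_aux[THEN conjunct1]

schematic_goal pmin_bound_aux:
  assumes lam: "\<forall>i<k. lam i > 0" and mu: "\<forall>i<k. mu i > 0" and z1: "\<forall>i<k. z i \<ge> 1"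
    and lmin: "lmin > 0" "\<forall>i<k. lmin \<le> lam i" and mmin: "mmin > 0" "\<forall>i<k. mmin \<le> mu i"
    and Z: "Z = (\<Sum>i<k. mu i * z i)" and Z0: "Z < Z0"
    and h: "h \<in> lattice_pts k" "lin k lam h \<le> Z"
  shows "(poisson_wt k z h \<ge> exp (- (Z0 / mmin)) / fact (nat \<lceil>Z0 / lmin\<rceil>) ^ k) \<and> (?dd::bool)"
proof -
  have pmin_bound: "poisson_wt k z h \<ge> exp (- (Z0 / mmin)) / fact (nat \<lceil>Z0 / lmin\<rceil>) ^ k"
  proof -
    define M where "M = nat \<lceil>Z0 / lmin\<rceil>"
    have hM: "h j \<le> M" if j: "j < k" for j
    proof -
      have "lmin * real (h j) \<le> lam j * real (h j)" using lmin j by (intro mult_right_mono) auto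
      also have "\<dots> \<le> lin k lam h" unfolding lin_def
        using j lam by (intro member_le_sum[where f="\<lambda>i. lam i * real (h i)"]) (auto simp: less_imp_le)
      finally have "real (h j) < Z0 / lmin" using h Z0 lmin by (simp add: field_simps)
      then have "real (h j) \<le> real M" unfolding M_def by linarith
      then show ?thesis by simp
    qed
    have sz: "(\<Sum>i<k. z i) \<le> Z0 / mmin"
    proof -
      have "mmin * (\<Sum>i<k. z i) = (\<Sum>i<k. mmin * z i)" by (simp add: sum_distrib_left)
      also have "\<dots> \<le> Z" unfolding Z using mmin z1 by (intro sum_mono mult_right_mono) force+
      finally show ?thesis using Z0 mmin by (simp add: field_simps)
    qed
    have "(\<Prod>i<k. exp (- z i) / fact M) \<le> poisson_wt k z h"
      unfolding poisson_pw
    proof (intro prod_mono conjI)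
      fix i assume "i \<in> {..<k}"
      then have i: "i < k" by simp
      show "0 \<le> exp (- z i) / fact M" by simp
      have "1 / fact M \<le> z i ^ h i / fact (h i)"
      proof -
        have "(1::real) / fact M \<le> 1 / fact (h i)"
          using hM[OF i] by (intro divide_left_mono) (auto simp: fact_mono)
        also have "\<dots> \<le> z i ^ h i / fact (h i)"
          using z1 i by (intro divide_right_mono one_le_power) auto
        finally show ?thesis .
      qed
      then show "exp (- z i) / fact M \<le> pw z i (h i)"
        unfolding pw_def using mult_left_mono[of "1 / fact M" "z i ^ h i / fact (h i)" "exp (- z i)"]
        by simp
    qed
    moreover have "(\<Prod>i<k. exp (- z i) / fact M) = exp (- (\<Sum>i<k. z i)) / fact M ^ k"
      by (simp add: prod_dividef exp_sum sum_negf[symmetric])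
    moreover have "exp (- (Z0 / mmin)) \<le> exp (- (\<Sum>i<k. z i))" using sz by simp
    moreover have "exp (- (Z0 / mmin)) / fact M ^ k \<le> exp (- (\<Sum>i<k. z i)) / fact M ^ k"
      using \<open>exp (- (Z0 / mmin)) \<le> exp (- (\<Sum>i<k. z i))\<close> by (intro divide_right_mono) auto
    ultimately show ?thesis unfolding M_def by linarith
  qed
  show "(poisson_wt k z h \<ge> exp (- (Z0 / mmin)) / fact (nat \<lceil>Z0 / lmin\<rceil>) ^ k) \<and> True" by (rule conjI[OF pmin_bound TrueI])
qed

lemmas pmin_bound = pmin_bound_aux[THEN conjunct1]

schematic_goal h0_exists_aux:
  assumes k: "k \<ge> 1" and lam: "\<forall>i<k. lam i > 0" and ZL: "Z \<ge> Lam k lam"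
  shows "(\<exists>h. h \<in> Hk k lam Z) \<and> (?dd::bool)"
proof -
  have h0_exists: "\<exists>h. h \<in> Hk k lam Z"
  proof -
    define La where "La = Lam k lam"
    obtain i where i: "i < k" "lam i = La" using Lam_props[OF k lam] unfolding La_def by auto
    have La0: "La > 0" using Lam_props[OF k lam] unfolding La_def by auto
    define m where "m = nat \<lfloor>Z / La\<rfloor>"
    have fl: "\<lfloor>Z / La\<rfloor> \<ge> 1" using ZL La0 unfolding La_def by (simp add: le_floor_iff)
    have rm: "real m = of_int \<lfloor>Z / La\<rfloor>" unfolding m_def using fl by simp
    have b1: "Z / La - 1 < real m" "real m \<le> Z / La" unfolding rm by linarith+
    define h where "h = restrict (\<lambda>j. if j = i then m else 0) {..<k}"
    have "lin k lam h = (\<Sum>j<k. if j = i then lam i * real m else 0)"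
      unfolding lin_def h_def by (intro sum.cong) auto
    also have "\<dots> = La * real m" using i by simp
    finally have lh: "lin k lam h = La * real m" .
    have "Z - La < La * real m" using b1 La0 by (simp add: field_simps)
    moreover have "La * real m \<le> Z" using b1 La0 by (simp add: field_simps)
    ultimately have "h \<in> Hk k lam Z" unfolding Hk_def La_def[symmetric] using lh
      by (auto simp: h_def lattice_restrict)
    then show ?thesis by blast
  qed
  show "(\<exists>h. h \<in> Hk k lam Z) \<and> True" by (rule conjI[OF h0_exists TrueI])
qed

lemmas h0_exists = h0_exists_aux[THEN conjunct1]

schematic_goal part_b_aux:
  fixes k :: nat and C :: real and lam mu :: "nat \<Rightarrow> real"
  assumes k: "k \<ge> 1" and C: "C \<ge> 0"
    and lam: "\<forall>i<k. lam i > 0" and mu: "\<forall>i<k. mu i > 0" and lm: "\<forall>i<k. ln (mu i / lam i) < lam i"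
  shows "(\<exists>K::real. \<forall>z::nat \<Rightarrow> real.
         (\<forall>i<k. z i \<ge> 1) \<longrightarrow> (\<Sum>i<k. mu i * z i) \<ge> Lam k lam \<longrightarrow>
         (let Z = (\<Sum>i<k. mu i * z i);
              g = (\<lambda>r. (1 + Z - lin k lam r) powr C * (\<Prod>i<k. exp (- z i) * (exp (lam i) * z i) ^ r i / fact (r i)))
          in g summable_on Hminus k lam Z \<and>
             (\<Sum>\<^sub>\<infinity>r\<in>Hminus k lam Z. g r) \<le> K * exp Z * Prob k z (Hk k lam Z))) \<and> (?dd::bool)"
proof -
  have part_b: "\<exists>K::real. \<forall>z::nat \<Rightarrow> real.
         (\<forall>i<k. z i \<ge> 1) \<longrightarrow> (\<Sum>i<k. mu i * z i) \<ge> Lam k lam \<longrightarrow>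
         (let Z = (\<Sum>i<k. mu i * z i);
              g = (\<lambda>r. (1 + Z - lin k lam r) powr C * (\<Prod>i<k. exp (- z i) * (exp (lam i) * z i) ^ r i / fact (r i)))
          in g summable_on Hminus k lam Z \<and>
             (\<Sum>\<^sub>\<infinity>r\<in>Hminus k lam Z. g r) \<le> K * exp Z * Prob k z (Hk k lam Z))"
  proof -
    define La where "La = Lam k lam"
    have La: "\<forall>i<k. lam i \<le> La" "La > 0" using Lam_props[OF k lam] unfolding La_def by auto
    obtain lmin where lmin: "lmin > 0" "\<forall>i<k. lmin \<le> lam i" using min_props[OF k lam] by blast
    obtain mmin where mmin: "mmin > 0" "\<forall>i<k. mmin \<le> mu i" using min_props[OF k mu] by blast
    have gt: "\<forall>i<k. lam i * exp (lam i) / mu i > 1"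
    proof (intro allI impI)
      fix i assume i: "i < k"
      have "mu i / lam i < exp (lam i)"
        using lm i lam mu by (metis exp_less_cancel_iff exp_ln divide_pos_pos)
      then show "lam i * exp (lam i) / mu i > 1" using lam mu i by (simp add: field_simps)
    qed
    obtain \<rho> where rho: "\<rho> > 1" "\<forall>i<k. \<rho> \<le> lam i * exp (lam i) / mu i"
      using min_props[OF k gt] by blast
    define \<eta> where "\<eta> = sqrt \<rho>"
    have eta: "\<eta> > 1" "\<eta> * \<eta> = \<rho>" using rho unfolding \<eta>_def by (auto simp: real_sqrt_gt_1_iff)
    have etaI: "\<forall>i<k. \<eta> * \<eta> * mu i \<le> lam i * exp (lam i)"
      using rho(2) eta(2) mu by (auto simp: field_simps)
    define t where "t = sqrt \<eta>"
    have t: "t > 1" "t * t = \<eta>" using eta unfolding t_def by (auto simp: real_sqrt_gt_1_iff)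
    obtain A where A: "\<forall>n::nat. (1 + La + La * real n) powr C \<le> A * t ^ n"
      using poly_exp_bound[OF La(2) t(1) C] by blast
    have A0: "A \<ge> 0"
    proof -
      have "0 \<le> (1 + La + La * real 0) powr C" by simp
      also have "\<dots> \<le> A" using A[rule_format, of 0] by simp
      finally show ?thesis .
    qed
    define c where "c = 1 / (1 - 1/t)"
    have c0: "c \<ge> 0" using t unfolding c_def by (simp add: field_simps)
    define Z0 where "Z0 = real k * La / (\<eta> - 1)"
    define pmin where "pmin = exp (- (Z0 / mmin)) / fact (nat \<lceil>Z0 / lmin\<rceil>) ^ k"
    have pmin0: "pmin > 0" unfolding pmin_def by simp
    define B2 where "B2 = (1 + Z0) powr C * exp Z0 / pmin"
    have B20: "B2 \<ge> 0" unfolding B2_def using pmin0 by simp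
    show ?thesis
    proof (intro exI[of _ "A * c ^ k + B2"] allI impI)
      fix z :: "nat \<Rightarrow> real"
      assume z1: "\<forall>i<k. z i \<ge> 1" and ZL: "(\<Sum>i<k. mu i * z i) \<ge> Lam k lam"
      define Z where "Z = (\<Sum>i<k. mu i * z i)"
      define g where "g = (\<lambda>r. (1 + Z - lin k lam r) powr C * (\<Prod>i<k. exp (- z i) * (exp (lam i) * z i) ^ r i / fact (r i)))"
      have zp: "\<forall>i<k. z i > 0" using z1 by force
      have g_eq: "g r = (1 + Z - lin k lam r) powr C * QQ k lam z r" for r
        unfolding g_def QQ_def qw_def ..
      have ZLa: "Z \<ge> La" using ZL unfolding Z_def La_def .
      have lin0: "lin k lam r \<ge> 0" for r unfolding lin_def using lam by (intro sum_nonneg) (auto simp: less_imp_le)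
      have Psum: "poisson_wt k z summable_on Hk k lam Z"
        by (rule summable_on_subset_banach[OF poisson_summable[OF zp]]) (auto simp: Hk_def)
      have Prob0: "Prob k z (Hk k lam Z) \<ge> 0" unfolding Prob_def
        using poisson_nonneg[OF zp] by (intro infsum_nonneg) auto
      have qsum: "(\<lambda>h. exp Z * poisson_wt k z h) summable_on Hk k lam Z"
        by (intro summable_on_cmult_right Psum)
      have qinf: "infsum (\<lambda>h. exp Z * poisson_wt k z h) (Hk k lam Z) = exp Z * Prob k z (Hk k lam Z)"
        unfolding Prob_def by (intro infsum_cmult_right Psum)
      have main: "g summable_on Hminus k lam Z \<and> infsum g (Hminus k lam Z) \<le> (A * c ^ k + B2) * exp Z * Prob k z (Hk k lam Z)"
      proof (cases "real k * La \<le> (\<eta> - 1) * Z")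
        case big: True
        have "g summable_on Hminus k lam Z \<and> infsum g (Hminus k lam Z) \<le> A * c ^ k * infsum (\<lambda>h. exp Z * poisson_wt k z h) (Hk k lam Z)"
        proof (rule transfer[where DD="lattice_pts k" and w="\<lambda>d. \<Prod>i<k. (1/t) ^ d i"
              and comb="\<lambda>h d. restrict (\<lambda>j. h j - d j) {..<k}"])
          show "\<And>r. r \<in> Hminus k lam Z \<Longrightarrow> 0 \<le> g r"
            unfolding g_eq using QQ_nonneg[OF zp] by (auto intro!: mult_nonneg_nonneg)
          show "\<And>h. h \<in> Hk k lam Z \<Longrightarrow> 0 \<le> exp Z * poisson_wt k z h" using poisson_nonneg[OF zp] by auto
          show "(\<lambda>h. exp Z * poisson_wt k z h) summable_on Hk k lam Z" by (rule qsum)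
          show "\<And>d. d \<in> lattice_pts k \<Longrightarrow> 0 \<le> (\<Prod>i<k. (1/t) ^ d i)" using t by (intro prod_nonneg) auto
          show "\<And>G. finite G \<Longrightarrow> G \<subseteq> lattice_pts k \<Longrightarrow> (\<Sum>d\<in>G. \<Prod>i<k. (1/t) ^ d i) \<le> c ^ k"
            unfolding c_def using geom_weight_bound[OF t(1)] by blast
          show "A \<ge> 0" by (rule A0)
          fix r assume r: "r \<in> Hminus k lam Z"
          then have rL: "r \<in> lattice_pts k" and rZ: "lin k lam r \<le> Z" by (auto simp: Hminus_def)
          obtain n :: nat where n: "Z / lmin < real n" using reals_Archimedean2 by blast
          have "Z - La - real n * lmin < lin k lam r" using n lmin La lin0[of r] by (simp add: field_simps)
          then obtain h where h: "h \<in> lattice_pts k" "Z - La < lin k lam h" "lin k lam h \<le> Z"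
            "\<forall>i<k. r i \<le> h i" "\<eta> ^ (\<Sum>i<k. h i - r i) * QQ k lam z r \<le> QQ k lam z h"
            using path_b[where n=n, OF lam mu zp etaI _ La(1) lmin Z_def big k rL _ rZ] eta
            by auto
          define d where "d = restrict (\<lambda>j. h j - r j) {..<k}"
          define s where "s = (\<Sum>i<k. h i - r i)"
          have hH: "h \<in> Hk k lam Z" using h unfolding Hk_def La_def by auto
          have dL: "d \<in> lattice_pts k" unfolding d_def by (rule lattice_restrict)
          have rc: "r = restrict (\<lambda>j. h j - d j) {..<k}"
          proof
            fix j show "r j = restrict (\<lambda>j. h j - d j) {..<k} j"
              using h(4) lattice_out[OF rL, of j] unfolding d_def by auto
          qed
          have wd: "(\<Prod>i<k. (1/t) ^ d i) = (1/t) ^ s"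
            unfolding d_def s_def by (rule diff_sum_power)
          have "Z - lin k lam r = (Z - lin k lam h) + (lin k lam h - lin k lam r)" by simp
          also have "\<dots> \<le> La + La * real s" unfolding s_def using lin_diff[of k r h lam La] h La lam
            by (auto simp: less_imp_le)
          finally have "(1 + Z - lin k lam r) powr C \<le> (1 + La + La * real s) powr C"
            using rZ La C by (intro powr_mono2) auto
          also have "\<dots> \<le> A * t ^ s" using A by blast
          finally have pw1: "(1 + Z - lin k lam r) powr C \<le> A * t ^ s" .
          have "t ^ s * QQ k lam z r = (1/t) ^ s * (\<eta> ^ s * QQ k lam z r)"
            using t by (simp add: t(2)[symmetric] power_mult_distrib field_simps)
          also have "\<dots> \<le> (1/t) ^ s * QQ k lam z h"
            using h(5) t unfolding s_def by (intro mult_left_mono) auto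
          also have "QQ k lam z h \<le> exp Z * poisson_wt k z h"
            unfolding QQ_eq using h(3) poisson_nonneg[OF zp] by (intro mult_right_mono) auto
          finally have pw2: "t ^ s * QQ k lam z r \<le> (1/t) ^ s * (exp Z * poisson_wt k z h)"
            using t by (simp add: mult_left_mono)
          have "g r \<le> A * t ^ s * QQ k lam z r"
            unfolding g_eq using pw1 QQ_nonneg[OF zp] by (intro mult_right_mono) auto
          also have "\<dots> \<le> A * ((1/t) ^ s * (exp Z * poisson_wt k z h))"
            using pw2 A0 by (simp add: mult.assoc mult_left_mono)
          finally have "g r \<le> A * (\<Prod>i<k. (1/t) ^ d i) * (exp Z * poisson_wt k z h)" by (simp add: wd mult_ac)
          then show "\<exists>h\<in>Hk k lam Z. \<exists>d\<in>lattice_pts k. r = restrict (\<lambda>j. h j - d j) {..<k} \<and>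
                      g r \<le> A * (\<Prod>i<k. (1/t) ^ d i) * (exp Z * poisson_wt k z h)"
            using hH dL rc by blast
        qed
        moreover have "A * c ^ k * (exp Z * Prob k z (Hk k lam Z)) \<le> (A * c ^ k + B2) * exp Z * Prob k z (Hk k lam Z)"
          using B20 Prob0 by (simp add: algebra_simps)
        ultimately show ?thesis unfolding qinf by linarith
      next
        case small: False
        have ZZ0: "Z < Z0" unfolding Z0_def using small eta by (simp add: field_simps)
        obtain h0 where h0: "h0 \<in> Hk k lam Z" using h0_exists[OF k lam] ZL unfolding Z_def by blast
        have ph0: "poisson_wt k z h0 \<ge> pmin" unfolding pmin_def
          using pmin_bound[OF lam mu z1 lmin mmin Z_def ZZ0] h0 by (auto simp: Hk_def)
        have eZ: "exp Z \<ge> 1" using ZLa La by simp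
        have "g summable_on Hminus k lam Z \<and> infsum g (Hminus k lam Z) \<le> B2 * 1 * infsum (\<lambda>h. exp Z * poisson_wt k z h) (Hk k lam Z)"
        proof (rule transfer[where DD="lattice_pts k" and w="poisson_wt k z" and comb="\<lambda>h d. d"])
          show "\<And>r. r \<in> Hminus k lam Z \<Longrightarrow> 0 \<le> g r"
            unfolding g_eq using QQ_nonneg[OF zp] by (auto intro!: mult_nonneg_nonneg)
          show "\<And>h. h \<in> Hk k lam Z \<Longrightarrow> 0 \<le> exp Z * poisson_wt k z h" using poisson_nonneg[OF zp] by auto
          show "(\<lambda>h. exp Z * poisson_wt k z h) summable_on Hk k lam Z" by (rule qsum)
          show "\<And>d. d \<in> lattice_pts k \<Longrightarrow> 0 \<le> poisson_wt k z d" using poisson_nonneg[OF zp] by auto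
          show "\<And>G. finite G \<Longrightarrow> G \<subseteq> lattice_pts k \<Longrightarrow> sum (poisson_wt k z) G \<le> 1"
          proof -
            fix G :: "(nat \<Rightarrow> nat) set" assume G: "finite G" "G \<subseteq> lattice_pts k"
            show "sum (poisson_wt k z) G \<le> 1" by (rule poisson_partial_le1[OF zp G])
          qed
          show "B2 \<ge> 0" by (rule B20)
          fix r assume r: "r \<in> Hminus k lam Z"
          then have rL: "r \<in> lattice_pts k" and rZ: "lin k lam r \<le> Z" by (auto simp: Hminus_def)
          have "(1 + Z - lin k lam r) powr C \<le> (1 + Z0) powr C"
            using rZ lin0[of r] ZZ0 C by (intro powr_mono2) auto
          moreover have "QQ k lam z r \<le> exp Z0 * poisson_wt k z r"
            unfolding QQ_eq using rZ ZZ0 poisson_nonneg[OF zp] by (intro mult_right_mono) auto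
          ultimately have "g r \<le> (1 + Z0) powr C * (exp Z0 * poisson_wt k z r)"
            unfolding g_eq using QQ_nonneg[OF zp] by (intro mult_mono) auto
          also have "\<dots> = B2 * poisson_wt k z r * pmin"
            unfolding B2_def using pmin0 by (simp add: field_simps)
          also have "\<dots> \<le> B2 * poisson_wt k z r * (exp Z * poisson_wt k z h0)"
          proof (intro mult_left_mono)
            show "pmin \<le> exp Z * poisson_wt k z h0"
              using eZ ph0 pmin0 mult_mono[of 1 "exp Z" pmin "poisson_wt k z h0"] by simp
            show "0 \<le> B2 * poisson_wt k z r" using B20 poisson_nonneg[OF zp] by simp
          qed
          finally show "\<exists>h\<in>Hk k lam Z. \<exists>d\<in>lattice_pts k. r = d \<and> g r \<le> B2 * poisson_wt k z d * (exp Z * poisson_wt k z h)"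
            using h0 rL by blast
        qed
        moreover have "B2 * (exp Z * Prob k z (Hk k lam Z)) \<le> (A * c ^ k + B2) * exp Z * Prob k z (Hk k lam Z)"
          using A0 c0 Prob0 by (simp add: algebra_simps)
        ultimately show ?thesis unfolding qinf by linarith
      qed
      then show "let Z = (\<Sum>i<k. mu i * z i);
                g = (\<lambda>r. (1 + Z - lin k lam r) powr C * (\<Prod>i<k. exp (- z i) * (exp (lam i) * z i) ^ r i / fact (r i)))
            in g summable_on Hminus k lam Z \<and>
               (\<Sum>\<^sub>\<infinity>r\<in>Hminus k lam Z. g r) \<le> (A * c ^ k + B2) * exp Z * Prob k z (Hk k lam Z)"
        unfolding Let_def Z_def[symmetric] g_def[symmetric] by simp
    qed
  qed
  show "(\<exists>K::real. \<forall>z::nat \<Rightarrow> real.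
         (\<forall>i<k. z i \<ge> 1) \<longrightarrow> (\<Sum>i<k. mu i * z i) \<ge> Lam k lam \<longrightarrow>
         (let Z = (\<Sum>i<k. mu i * z i);
              g = (\<lambda>r. (1 + Z - lin k lam r) powr C * (\<Prod>i<k. exp (- z i) * (exp (lam i) * z i) ^ r i / fact (r i)))
          in g summable_on Hminus k lam Z \<and>
             (\<Sum>\<^sub>\<infinity>r\<in>Hminus k lam Z. g r) \<le> K * exp Z * Prob k z (Hk k lam Z))) \<and> True" by (rule conjI[OF part_b TrueI])
qed

lemmas part_b = part_b_aux[THEN conjunct1]

theorem lemma4p3:
  fixes k :: nat and C :: real and lam mu :: "nat \<Rightarrow> real"
  assumes "k \<ge> 1" and "C \<ge> 0"
    and "\<forall>i<k. lam i > 0" and "\<forall>i<k. mu i > 0"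
  shows
   "((\<forall>i<k. lam i < mu i) \<longrightarrow>
      (\<exists>K::real. \<forall>z::nat \<Rightarrow> real.
         (\<forall>i<k. z i \<ge> 1) \<longrightarrow> (\<Sum>i<k. mu i * z i) \<ge> Lam k lam \<longrightarrow>
         (let Z = (\<Sum>i<k. mu i * z i);
              f = (\<lambda>r. (1 + lin k lam r - Z) powr C * (\<Prod>i<k. exp (- z i) * z i ^ r i / fact (r i)))
          in f summable_on Hplus k lam Z \<and>
             (\<Sum>\<^sub>\<infinity>r\<in>Hplus k lam Z. f r) \<le> K * Prob k z (Hk k lam Z))))
    \<and>
    ((\<forall>i<k. ln (mu i / lam i) < lam i) \<longrightarrow>
      (\<exists>K::real. \<forall>z::nat \<Rightarrow> real.
         (\<forall>i<k. z i \<ge> 1) \<longrightarrow> (\<Sum>i<k. mu i * z i) \<ge> Lam k lam \<longrightarrow>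
         (let Z = (\<Sum>i<k. mu i * z i);
              g = (\<lambda>r. (1 + Z - lin k lam r) powr C * (\<Prod>i<k. exp (- z i) * (exp (lam i) * z i) ^ r i / fact (r i)))
          in g summable_on Hminus k lam Z \<and>
             (\<Sum>\<^sub>\<infinity>r\<in>Hminus k lam Z. g r) \<le> K * exp Z * Prob k z (Hk k lam Z))))"
    using part_a[OF assms] part_b[OF assms] by blast

end
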